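(* Let $X$, $Z$ be topological vector spaces, $C\subseteq Z$ a nonempty closed convex cone with $C^-\neq\{0\}$, and $f:X\to\mathcal{F}(Z,C)$. If $f$ is Hausdorff upper continuous at $x_0\in X$, then $f$ is lower lattice-semicontinuous at $x_0$.
   Context: $\mathcal{F}(Z,C)=\{A\subseteq Z\colon A=\operatorname{cl}(A+C)\}$ (empty set included); $C^-=\{z^*\in Z^*\colon z^*(z)\le0\ \forall z\in C\}$. $f$ is Hausdorff upper continuous at $x_0$ iff for every neighborhood $V$ of $0$ in $Z$ there is a neighborhood $U$ of $x_0$ with $f(x)\subseteq f(x_0)+V$ for all $x\in U$. $f$ is lower lattice-semicontinuous at $x_0$ iff $f(x_0)\supseteq\bigcap_{U\in\mathcal{N}(x_0)}\operatorname{cl}\bigcup_{x\in U}f(x)$ ($\mathcal{N}(x_0)$ the neighborhoods of $x_0$); equivalently, for every $z_0\notin f(x_0)$ there exist a neighborhood $U$ of $x_0$ and a neighborhood $V$ of $z_0$ with $z\notin f(x)$ for all $x\in U$, $z\in V$. *)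

theory Defs
  imports "HOL-Analysis.Analysis"
begin

text \<open>Real topological vector spaces (not necessarily Hausdorff): a real vector space with a
  topology making addition, negation (topological abelian group) and scalar multiplication
  (jointly, i.e. w.r.t. the product filter of neighbourhoods, which is the neighbourhood
  filter of the product topology) continuous.\<close>
class topological_real_vector = real_vector + topological_ab_group_add +
  assumes tendsto_scaleR_joint:
    "\<And>(c::real) (x::'a). filterlim (\<lambda>(b, y). b *\<^sub>R y) (nhds (c *\<^sub>R x)) (nhds c \<times>\<^sub>F nhds x)"

definition nbhds :: "'a::topological_space \<Rightarrow> 'a set set" where
  "nbhds x = {N. \<exists>W. open W \<and> x \<in> W \<and> W \<subseteq> N}"

definition msum :: "'a::real_vector set \<Rightarrow> 'a set \<Rightarrow> 'a set" where
  "msum A B = {a + b | a b. a \<in> A \<and> b \<in> B}"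

text \<open>The family F(Z,C) of C-upper closed sets (empty set included).\<close>
definition upper_closed_sets :: "'a::topological_real_vector set \<Rightarrow> 'a set set" where
  "upper_closed_sets C = {A. A = closure (msum A C)}"

definition neg_dual_cone :: "'a::topological_real_vector set \<Rightarrow> ('a \<Rightarrow> real) set" where
  "neg_dual_cone C = {g. linear g \<and> continuous_on UNIV g \<and> (\<forall>z\<in>C. g z \<le> 0)}"

definition hausdorff_upper_continuous_at ::
  "('x::topological_space \<Rightarrow> 'z::topological_real_vector set) \<Rightarrow> 'x \<Rightarrow> bool" where
  "hausdorff_upper_continuous_at f x0 \<longleftrightarrow>
     (\<forall>V\<in>nbhds (0::'z). \<exists>U\<in>nbhds x0. \<forall>x\<in>U. f x \<subseteq> msum (f x0) V)"

definition lower_lattice_semicontinuous_at ::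
  "('x::topological_space \<Rightarrow> 'z::topological_space set) \<Rightarrow> 'x \<Rightarrow> bool" where
  "lower_lattice_semicontinuous_at f x0 \<longleftrightarrow>
     (\<Inter>U\<in>nbhds x0. closure (\<Union>x\<in>U. f x)) \<subseteq> f x0"

end

theory Submission
  imports Defs
begin

theorem mainTheorem10:
  fixes f :: "'x::topological_real_vector \<Rightarrow> 'z::topological_real_vector set"
    and C :: "'z set" and x0 :: 'x
  assumes "C \<noteq> {}" and "closed C" and "convex C" and "cone C"
    and "neg_dual_cone C \<noteq> {(\<lambda>_. 0)}"
    and "\<forall>x. f x \<in> upper_closed_sets C"
    and "hausdorff_upper_continuous_at f x0"
  shows "lower_lattice_semicontinuous_at f x0"
  unfolding lower_lattice_semicontinuous_at_def
proof
  fix z0 assume z0: "z0 \<in> (\<Inter>U\<in>nbhds x0. closure (\<Union>x\<in>U. f x))"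
  show "z0 \<in> f x0"
  proof (rule ccontr)
    assume nz: "z0 \<notin> f x0"
    let ?A = "f x0"
    have "?A = closure (msum ?A C)" using assms(6) by (auto simp: upper_closed_sets_def)
    hence clA: "closed ?A" by (metis closed_closure)
    have lim: "((\<lambda>p. z0 + snd p - fst p) \<longlongrightarrow> z0 + 0 - 0) (nhds (0::'z) \<times>\<^sub>F nhds 0)"
      proof -
      have f: "(fst \<longlongrightarrow> (0::'z)) (nhds ((0::'z),(0::'z)))"
        using tendsto_fst[OF filterlim_ident[of "nhds (0::'z,0::'z)"]] by simp
      have g: "(snd \<longlongrightarrow> (0::'z)) (nhds ((0::'z),(0::'z)))"
        using tendsto_snd[OF filterlim_ident[of "nhds (0::'z,0::'z)"]] by simp
      show ?thesis unfolding nhds_prod[symmetric]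
        by (intro tendsto_intros f g)
    qed
    have "eventually (\<lambda>p. z0 + snd p - fst p \<in> - ?A) (nhds (0::'z) \<times>\<^sub>F nhds 0)"
      using topological_tendstoD[OF lim[simplified], of "- ?A"] clA nz by (simp add: open_Compl)
    then obtain P Q where P: "eventually P (nhds (0::'z))" and Q: "eventually Q (nhds (0::'z))"
      and PQ: "\<And>v w. P v \<Longrightarrow> Q w \<Longrightarrow> z0 + w - v \<notin> ?A"
      unfolding eventually_prod_filter by force
    from P obtain V1 where V1: "open V1" "0 \<in> V1" "\<forall>v\<in>V1. P v" unfolding eventually_nhds by auto
    from Q obtain V2 where V2: "open V2" "0 \<in> V2" "\<forall>v\<in>V2. Q v" unfolding eventually_nhds by auto
    have "V1 \<in> nbhds 0" using V1 unfolding nbhds_def by auto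
    then obtain U where U: "U \<in> nbhds x0" and fU: "\<forall>x\<in>U. f x \<subseteq> msum ?A V1"
      using assms(7) unfolding hausdorff_upper_continuous_at_def by blast
    define W where "W = (\<lambda>z. z - z0) -` V2"
    have oW: "open W" unfolding W_def
      by (rule open_vimage[OF V2(1)]) (intro continuous_intros)
    have zW: "z0 \<in> W" using V2 by (auto simp: W_def)
    have "W \<inter> (\<Union>x\<in>U. f x) = {}"
    proof (rule ccontr)
      assume "W \<inter> (\<Union>x\<in>U. f x) \<noteq> {}"
      then obtain z x where "z \<in> W" "x \<in> U" "z \<in> f x" by auto
      then obtain a v where a: "a \<in> ?A" "v \<in> V1" "z = a + v" using fU unfolding msum_def by blast
      have "z - z0 \<in> V2" using \<open>z \<in> W\<close> by (simp add: W_def)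
      hence "z0 + (z - z0) - v \<notin> ?A" using PQ V1 V2 a by blast
      moreover have "z0 + (z - z0) - v = a" using a by (simp add: algebra_simps)
      ultimately show False using a by simp
    qed
    hence "W \<inter> closure (\<Union>x\<in>U. f x) = {}" using open_Int_closure_eq_empty[OF oW] by blast
    moreover have "z0 \<in> closure (\<Union>x\<in>U. f x)" using z0 U by blast
    ultimately show False using zW by blast
  qed
qed

end
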